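(* Let $N\ge1$ and $0\le k<N$ be integers, let $q,z_0\in\mathbb{C}^\times$, and fix choices of $z_0^{1/N}$ and $q^{1/N^2}$, writing $q^{a/N^2}:=(q^{1/N^2})^a$ for $a\in\mathbb{Z}$. For $(n,m)\in\mathbb{Z}^2$ put $l_{n,m}=kn-Nm$. Let $\tau:\mathbb{Z}^2\to\mathbb{C}^\times$, $(n,m)\mapsto\tau_{(n,m)}$, satisfy $$\tau_{(n,m+1)}\tau_{(n,m-1)}=\tau_{(n,m)}^2+z_0^{1/N}q^{l_{n,m}/N^2}\tau_{(n+1,m)}\tau_{(n-1,m)}\quad\text{for all }(n,m)\in\mathbb{Z}^2,$$ together with $\tau_{(n+N,m+k)}=\tau_{(n,m)}$. Define $$x_{(n,m)}=z_0^{1/N}q^{(l_{n,m}+N)/N^2}\,\tau_{(n-1,m-1)}\tau_{(n+1,m-1)}\tau_{(n,m-1)}^{-2}.$$ Then for all $(n,m)$, $$\frac{x_{(n,m+1)}x_{(n,m-1)}}{x_{(n,m)}^2}=\frac{(1+x_{(n+1,m)})(1+x_{(n-1,m)})}{(1+x_{(n,m)})^2}$$ (whenever the right-hand side is defined) and $x_{(n,m)}=x_{(n+N,m+k)}$. *)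

theory Defs
  imports Complex_Main
begin

definition lnm :: "int \<Rightarrow> int \<Rightarrow> int \<Rightarrow> int \<Rightarrow> int" where
  "lnm N k n m = k * n - N * m"

text \<open>x_{(n,m)} = z0^{1/N} q^{(l_{n,m}+N)/N^2} tau(n-1,m-1) tau(n+1,m-1) tau(n,m-1)^{-2},
  where zr is the chosen z0^{1/N} and qr the chosen q^{1/N^2}, q^{a/N^2} = qr powi a.\<close>
definition xvar :: "int \<Rightarrow> int \<Rightarrow> complex \<Rightarrow> complex \<Rightarrow> (int \<Rightarrow> int \<Rightarrow> complex) \<Rightarrow> int \<Rightarrow> int \<Rightarrow> complex" where
  "xvar N k zr qr \<tau> n m =
     zr * qr powi (lnm N k n m + N) * \<tau> (n - 1) (m - 1) * \<tau> (n + 1) (m - 1) * inverse ((\<tau> n (m - 1))\<^sup>2)"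

end

theory Submission
  imports Defs
begin

lemma L1: fixes a b c d e f g h i :: complex
  assumes "a\<noteq>0" "b\<noteq>0" "c\<noteq>0" "d\<noteq>0" "e\<noteq>0" "f\<noteq>0" "g\<noteq>0" "h\<noteq>0" "i\<noteq>0"
  shows "(a*g/d^2)*(c*i/f^2)/(b*h/e^2)^2 = (g*i/h^2)*(a*c/b^2)/(d*f/e^2)^2"
  using assms by (simp add: field_simps)

lemma L2: fixes z p1 p2 p3 u v w :: complex
  assumes "z\<noteq>0" "p3\<noteq>0" "p1*p2 = p3^2"
  shows "(z*p1*u)*(z*p2*w)/(z*p3*v)^2 = u*w/v^2"
proof -
  have e1: "(z*p1*u)*(z*p2*w) = (z^2*(p1*p2))*(u*w)" by (simp add: algebra_simps power2_eq_square)
  have e2: "(z*p3*v)^2 = (z^2*p3^2)*v^2" by (simp add: power_mult_distrib)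
  have nz: "z^2*p3^2 \<noteq> 0" using assms by simp
  show ?thesis unfolding e1 e2 assms(3) using nz by (rule mult_divide_mult_cancel_left)
qed

lemma L3: fixes z p a b c :: complex
  assumes "c \<noteq> 0"
  shows "1 + z*p*(a*b/c^2) = (c^2 + z*p*b*a)/c^2"
  using assms by (simp add: field_simps)

lemma L4: fixes qr :: complex and a N :: int
  assumes "qr \<noteq> 0"
  shows "qr powi (a - N) * qr powi (a + N) = (qr powi a)^2"
proof -
  have h: "\<And>m n. qr powi (m + n) = qr powi m * qr powi n" using assms by (simp add: power_int_add)
  have "qr powi (a - N) * qr powi (a + N) = qr powi ((a - N) + (a + N))"
    by (rule h[symmetric])
  also have "(a - N) + (a + N) = a + a" by simp
  also have "qr powi (a + a) = (qr powi a)^2" unfolding h by (simp add: power2_eq_square)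
  finally show ?thesis .
qed

theorem lemma2p8:
  fixes N k :: int and q z0 zr qr :: complex and \<tau> :: "int \<Rightarrow> int \<Rightarrow> complex"
  assumes hN: "N \<ge> 1" and hk: "0 \<le> k" "k < N"
    and hq: "q \<noteq> 0" and hz0: "z0 \<noteq> 0"
    and hzr: "zr ^ nat N = z0" and hqr: "qr ^ nat (N^2) = q"
    and h\<tau>0: "\<And>n m. \<tau> n m \<noteq> 0"
    and hrec: "\<And>n m. \<tau> n (m + 1) * \<tau> n (m - 1) =
                 (\<tau> n m)\<^sup>2 + zr * qr powi (lnm N k n m) * \<tau> (n + 1) m * \<tau> (n - 1) m"
    and hper: "\<And>n m. \<tau> (n + N) (m + k) = \<tau> n m"
  shows "(\<forall>n m. 1 + xvar N k zr qr \<tau> n m \<noteq> 0 \<longrightarrow>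
            xvar N k zr qr \<tau> n (m + 1) * xvar N k zr qr \<tau> n (m - 1) / (xvar N k zr qr \<tau> n m)\<^sup>2
            = (1 + xvar N k zr qr \<tau> (n + 1) m) * (1 + xvar N k zr qr \<tau> (n - 1) m)
              / (1 + xvar N k zr qr \<tau> n m)\<^sup>2)
       \<and> (\<forall>n m. xvar N k zr qr \<tau> n m = xvar N k zr qr \<tau> (n + N) (m + k))"
proof -
  have zr0: "zr \<noteq> 0"
  proof
    assume "zr = 0"
    moreover have "nat N > 0" using hN by simp
    ultimately show False using hzr hz0 by (simp add: power_0_left)
  qed
  have qr0: "qr \<noteq> 0"
  proof
    assume "qr = 0"
    moreover have "nat (N^2) > 0" using hN by simp
    ultimately show False using hqr hq by (metis zero_power)
  qed
  define l where "l = lnm N k"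
  define A where "A n m = \<tau> (n - 1) m * \<tau> (n + 1) m / (\<tau> n m)\<^sup>2" for n m
  define T where "T n m = \<tau> n m * \<tau> n (m - 2) / (\<tau> n (m - 1))\<^sup>2" for n m
  have lsh: "lnm N k n m + N = l n (m - 1)" for n m by (simp add: l_def lnm_def algebra_simps)
  have xe: "xvar N k zr qr \<tau> n m = zr * qr powi (l n (m - 1)) * A n (m - 1)" for n m
    unfolding xvar_def A_def lsh by (simp add: divide_inverse mult.assoc)
  have Te: "1 + xvar N k zr qr \<tau> n m = T n m" for n m
  proof -
    have r: "\<tau> n m * \<tau> n (m - 2) = (\<tau> n (m - 1))\<^sup>2 + zr * qr powi (l n (m - 1)) * \<tau> (n + 1) (m - 1) * \<tau> (n - 1) (m - 1)"
      using hrec[of n "m - 1"] by (simp add: l_def)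
    show ?thesis unfolding xe T_def A_def r by (rule L3[OF h\<tau>0])
  qed
  have part1: "xvar N k zr qr \<tau> n (m + 1) * xvar N k zr qr \<tau> n (m - 1) / (xvar N k zr qr \<tau> n m)\<^sup>2
            = (1 + xvar N k zr qr \<tau> (n + 1) m) * (1 + xvar N k zr qr \<tau> (n - 1) m)
              / (1 + xvar N k zr qr \<tau> n m)\<^sup>2" for n m
  proof -
    have l1: "l n m = l n (m - 1) - N" and l2: "l n (m - 2) = l n (m - 1) + N"
      by (simp_all add: l_def lnm_def algebra_simps)
    have pw: "qr powi (l n m) * qr powi (l n (m - 2)) = (qr powi (l n (m - 1)))\<^sup>2"
      unfolding l1 l2 by (rule L4[OF qr0])
    have pnz: "qr powi j \<noteq> 0" for j using qr0 by simp
    have x1: "xvar N k zr qr \<tau> n (m + 1) = zr * qr powi (l n m) * A n m"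
      using xe[of n "m + 1"] by simp
    have x2: "xvar N k zr qr \<tau> n (m - 1) = zr * qr powi (l n (m - 2)) * A n (m - 2)"
      using xe[of n "m - 1"] by (simp add: algebra_simps)
    have "xvar N k zr qr \<tau> n (m + 1) * xvar N k zr qr \<tau> n (m - 1) / (xvar N k zr qr \<tau> n m)\<^sup>2
       = A n m * A n (m - 2) / (A n (m - 1))\<^sup>2"
      unfolding x1 x2 xe[of n m] by (rule L2[OF zr0 pnz pw])
    also have "\<dots> = T (n + 1) m * T (n - 1) m / (T n m)\<^sup>2"
      unfolding A_def T_def by (rule L1) (rule h\<tau>0)+
    finally show ?thesis unfolding Te .
  qed
  have part2: "xvar N k zr qr \<tau> n m = xvar N k zr qr \<tau> (n + N) (m + k)" for n m
  proof -
    have "lnm N k (n + N) (m + k) = lnm N k n m" by (simp add: lnm_def algebra_simps)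
    moreover have "\<tau> (n + N - 1) (m + k - 1) = \<tau> (n - 1) (m - 1)"
      using hper[of "n - 1" "m - 1"] by (simp add: algebra_simps)
    moreover have "\<tau> (n + N + 1) (m + k - 1) = \<tau> (n + 1) (m - 1)"
      using hper[of "n + 1" "m - 1"] by (simp add: algebra_simps)
    moreover have "\<tau> (n + N) (m + k - 1) = \<tau> n (m - 1)"
      using hper[of "n" "m - 1"] by (simp add: algebra_simps)
    ultimately show ?thesis unfolding xvar_def by simp
  qed
  show ?thesis using part1 part2 by blast
qed

end
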